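(* Define integers $(\eta_n)_{n\geq 0}$ by \[\sum_{n\geq 0}\eta_nx^n=\frac{1-x}{\sqrt{1 - 4x + 4x^2 - 4x^3 + 4x^4}}.\] Then for all $n\geq 1$, \[\deg(\mathscr C:\mathrm{Comp}(n)\to\mathrm{Comp}(n))=\frac{\eta_n}{2^{n-1}}.\] Consequently, as $n\to\infty$, \[\deg(\mathscr C:\mathrm{Comp}(n)\to\mathrm{Comp}(n))\sim\frac{1-\rho}{\sqrt{\pi(1-3\rho+2\rho^2-\rho^3)n}}\left(\frac{1}{2\rho}\right)^n,\] where $\rho\approx 0.33933$ is the smallest positive real root of $1-4x+4x^2-4x^3+4x^4$.
   Context: For finite sets $X,Y$ and $f:X\to Y$, $\deg(f)=\frac{1}{|X|}\sum_{y\in Y}|f^{-1}(y)|^2$. $\mathrm{Comp}(n)$ is the set of compositions of $n$, i.e. tuples $(c_1,\dots,c_\ell)$ of positive integers summing to $n$. Carolina solitaire $\mathscr C:\mathrm{Comp}(n)\to\mathrm{Comp}(n)$ sends $c=(c_1,\ldots,c_\ell)$ to the composition obtained by deleting all zeros from the tuple $(\ell,c_1-1,\ldots,c_\ell-1)$ (keeping the order). For example, $\mathscr C(3,1,3,7,1,8)=(6,2,2,6,7)$. *)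

theory Defs
  imports "HOL-Analysis.Analysis" "HOL-Computational_Algebra.Formal_Power_Series"
    "HOL-Library.Landau_Symbols"
begin

definition map_deg :: "('a \<Rightarrow> 'b) \<Rightarrow> 'a set \<Rightarrow> 'b set \<Rightarrow> real" where
  "map_deg f X Y = (\<Sum>y\<in>Y. real (card {x\<in>X. f x = y}) ^ 2) / real (card X)"

definition Comp :: "nat \<Rightarrow> nat list set" where
  "Comp n = {c. (\<forall>x\<in>set c. 0 < x) \<and> sum_list c = n}"

definition carolina :: "nat list \<Rightarrow> nat list" where
  "carolina c = filter (\<lambda>x. x \<noteq> 0) (length c # map (\<lambda>x. x - 1) c)"

definition quartic :: "real \<Rightarrow> real" where
  "quartic x = 1 - 4*x + 4*x^2 - 4*x^3 + 4*x^4"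

definition quartic_fps :: "real fps" where
  "quartic_fps = 1 - 4 * fps_X + 4 * fps_X^2 - 4 * fps_X^3 + 4 * fps_X^4"

text \<open>Generating function (1-x)/sqrt(quartic), with the square root normalised to have
  constant term 1.\<close>
definition eta_fps :: "real fps" where
  "eta_fps = (1 - fps_X) * inverse (fps_radical (\<lambda>k x. root k x) 2 quartic_fps)"

definition eta :: "nat \<Rightarrow> real" where
  "eta n = fps_nth eta_fps n"

end

theory Submission
  imports Defs
begin

lemma rel_comp: "real n * real ((n - 1) choose k) = (real n - real k) * real (n choose k)"
proof (cases "k \<le> n")
  case True
  have "(n - k) * (n choose k) = n * ((n - 1) choose k)" by (rule binomial_absorb_comp)
  hence "real (n - k) * real (n choose k) = real n * real ((n - 1) choose k)"
    by (metis of_nat_mult)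
  with True show ?thesis by (simp add: of_nat_diff)
next
  case False
  hence "n choose k = 0" by simp
  moreover have "(n - 1) choose k = 0" using False by (simp add: binomial_eq_0)
  ultimately show ?thesis by (simp only: of_nat_0 mult_zero_right)
qed

lemma rel_abs: "real (Suc k) * real (n choose Suc k) = real n * real ((n - 1) choose k)"
  by (metis binomial_absorption of_nat_mult)

lemma legendre_coeff:
  fixes N m :: nat
  assumes "N \<ge> 1"
  shows "real (N+1) * real ((N+1) choose m)^2 =
     real (2*N+1) * (real (N choose m)^2 + (if m = 0 then 0 else real (N choose (m-1))^2))
     - real N * (real ((N-1) choose m)^2
        - 2 * (if m = 0 then 0 else real ((N-1) choose (m-1))^2)
        + (if m \<le> 1 then 0 else real ((N-1) choose (m-2))^2))"
proof -
  define a where "a = real ((N+1) choose m)"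
  define b where "b = real (N choose m)"
  define c where "c = (if m = 0 then 0 else real (N choose (m-1)))"
  define d where "d = real ((N-1) choose m)"
  define e where "e = (if m = 0 then 0 else real ((N-1) choose (m-1)))"
  define f where "f = (if m \<le> 1 then 0 else real ((N-1) choose (m-2)))"
  have hb: "real (N+1) * b = (real (N+1) - real m) * a"
    using rel_comp[of "N+1" m] by (simp add: a_def b_def)
  have hc: "real (N+1) * c = real m * a"
  proof (cases m)
    case 0 thus ?thesis by (simp add: c_def)
  next
    case (Suc k) thus ?thesis using rel_abs[of k "N+1"] by (simp add: a_def c_def)
  qed
  have hd: "real N * d = (real N - real m) * b"
    using rel_comp[of N m] by (simp add: d_def b_def)
  have he: "real N * e = real m * b"
  proof (cases m)
    case 0 thus ?thesis by (simp add: e_def)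
  next
    case (Suc k) thus ?thesis using rel_abs[of k N] by (simp add: b_def e_def)
  qed
  have hf: "real N * f = (real m - 1) * c"
  proof (cases m)
    case 0 thus ?thesis by (simp add: f_def c_def)
  next
    case (Suc k)
    show ?thesis
    proof (cases k)
      case 0 thus ?thesis using Suc by (simp add: f_def c_def)
    next
      case (Suc j)
      thus ?thesis using rel_abs[of j N] \<open>m = Suc k\<close> by (simp add: f_def c_def)
    qed
  qed
  define p where "p = real N"
  define q where "q = real m"
  have hb': "(p+1) * b = (p+1-q) * a" using hb by (simp add: p_def q_def add.commute)
  have hc': "(p+1) * c = q * a" using hc by (simp add: p_def q_def add.commute)
  have hd': "p * d = (p - q) * b" using hd by (simp add: p_def q_def)
  have he': "p * e = q * b" using he by (simp add: p_def q_def)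
  have hf': "p * f = (q - 1) * c" using hf by (simp add: p_def q_def)
  have h1: "(p+1)^2*p^2*b^2 = p^2*(p+1-q)^2*a^2"
    by (metis hb' power_mult_distrib mult.commute mult.assoc)
  have h2: "(p+1)^2*p^2*c^2 = p^2*q^2*a^2"
    by (metis hc' power_mult_distrib mult.commute mult.assoc)
  have h3: "(p+1)^2*p^2*d^2 = (p-q)^2*(p+1-q)^2*a^2"
  proof -
    have "(p+1)^2*p^2*d^2 = ((p-q)*((p+1)*b))^2" using hd' by algebra
    also have "... = (p-q)^2*(p+1-q)^2*a^2" using hb' by (simp add: power_mult_distrib)
    finally show ?thesis .
  qed
  have h4: "(p+1)^2*p^2*e^2 = q^2*(p+1-q)^2*a^2"
  proof -
    have "(p+1)^2*p^2*e^2 = (q*((p+1)*b))^2" using he' by algebra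
    also have "... = q^2*(p+1-q)^2*a^2" using hb' by (simp add: power_mult_distrib)
    finally show ?thesis .
  qed
  have h5: "(p+1)^2*p^2*f^2 = (q-1)^2*q^2*a^2"
  proof -
    have "(p+1)^2*p^2*f^2 = ((q-1)*((p+1)*c))^2" using hf' by algebra
    also have "... = (q-1)^2*q^2*a^2" using hc' by (simp add: power_mult_distrib)
    finally show ?thesis .
  qed
  have "(p+1)^2*p^2*((p+1) * a^2) = (p+1)^2*p^2*((2*p+1) * (b^2 + c^2) - p * (d^2 - 2*e^2 + f^2))"
    using h1 h2 h3 h4 h5 by algebra
  moreover have "(p+1)^2*p^2 \<noteq> 0" using assms by (simp add: p_def)
  ultimately have "(p+1) * a^2 = (2*p+1) * (b^2 + c^2) - p * (d^2 - 2*e^2 + f^2)" by simp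
  hence "real (N+1) * a^2 = real (2*N+1) * (b^2 + c^2) - real N * (d^2 - 2*e^2 + f^2)"
    by (simp add: p_def add.commute)
  thus ?thesis by (simp add: a_def b_def c_def d_def e_def f_def power2_eq_square if_distrib cong: if_cong)
qed

abbreviation fnth (infixl "$$" 90) where "f $$ n \<equiv> fps_nth f n"

definition Lz :: "nat \<Rightarrow> real fps" where "Lz l = Abs_fps (\<lambda>m. real (l choose m)^2)"
definition Gt :: "real fps fps" where "Gt = Abs_fps Lz"
definition wz :: "real fps" where "wz = 1 + fps_X"
definition vz :: "real fps" where "vz = (1 - fps_X)^2"
definition Dt :: "real fps fps" where
  "Dt = 1 - 2 * fps_const wz * fps_X + fps_const vz * fps_X^2"

lemma Lz_0: "Lz 0 = 1"
  by (simp add: Lz_def fps_eq_iff)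

lemma Lz_1: "Lz 1 = wz"
  by (auto simp add: Lz_def wz_def fps_eq_iff binomial_eq_0)

lemma Lz_Suc0: "Lz (Suc 0) = wz" using Lz_1 by simp

lemma wz_mult_nth: "(wz * f) $$ m = f $$ m + (if m = 0 then 0 else f $$ (m - 1))"
  by (simp add: wz_def algebra_simps)

lemma vz_mult_nth: "(vz * f) $$ m = f $$ m - 2 * (if m = 0 then 0 else f $$ (m - 1))
   + (if m \<le> 1 then 0 else f $$ (m - 2))"
proof -
  have "vz * f = f - 2 * (fps_X * f) + fps_X^2 * f" by (simp add: vz_def power2_eq_square algebra_simps)
  thus ?thesis by (simp add: fps_X_power_mult_nth)
qed

lemma Lz_rec:
  assumes "N \<ge> 1"
  shows "fps_const (real (N+1)) * Lz (N+1) =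
     fps_const (real (2*N+1)) * (wz * Lz N) - fps_const (real N) * (vz * Lz (N-1))"
proof (rule fps_ext)
  fix m
  show "(fps_const (real (N+1)) * Lz (N+1)) $$ m =
     (fps_const (real (2*N+1)) * (wz * Lz N) - fps_const (real N) * (vz * Lz (N-1))) $$ m"
    using legendre_coeff[OF assms, of m]
    by (simp add: wz_mult_nth vz_mult_nth Lz_def)
qed

lemma Gt_ode: "Dt * fps_deriv Gt = (fps_const wz - fps_const vz * fps_X) * Gt"
proof (rule fps_ext)
  fix l
  have e1: "Dt * fps_deriv Gt = fps_deriv Gt - fps_const (2 * wz) * (fps_X * fps_deriv Gt)
     + fps_const vz * (fps_X^2 * fps_deriv Gt)"
    by (simp add: Dt_def algebra_simps flip: fps_const_mult)
  have e2: "(fps_const wz - fps_const vz * fps_X) * Gt = fps_const wz * Gt - fps_const vz * (fps_X * Gt)"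
    by (simp add: algebra_simps)
  have of_nat_fps: "\<And>k. (of_nat k :: real fps) = fps_const (real k)"
    by (simp add: fps_of_nat)
  show "(Dt * fps_deriv Gt) $$ l = ((fps_const wz - fps_const vz * fps_X) * Gt) $$ l"
  proof (cases l)
    case 0
    then show ?thesis unfolding e1 e2 by (simp add: Gt_def Lz_0 Lz_Suc0)
  next
    case (Suc N)
    have r: "fps_const (real (N+2)) * Lz (N+2) =
     fps_const (real (2*(N+1)+1)) * (wz * Lz (N+1)) - fps_const (real (N+1)) * (vz * Lz N)"
      using Lz_rec[of "N+1"] by (simp add: numeral_2_eq_2)
    have "(Dt * fps_deriv Gt) $$ l = fps_const (real (N+2)) * Lz (N+2)
       - 2 * (wz * (fps_const (real (N+1)) * Lz (N+1))) + vz * (fps_const (real N) * Lz N)"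
      unfolding e1 using Suc
      by (cases N) (simp_all add: Gt_def fps_X_power_mult_nth of_nat_fps numeral_2_eq_2 algebra_simps)
    also have "\<dots> = wz * Lz (N+1) - vz * Lz N"
    proof -
      have c1: "fps_const (real (N+2)) = fps_const (real N) + 2"
        by (simp add: fps_numeral_fps_const flip: fps_const_add)
      have c2: "fps_const (real (2*(N+1)+1)) = 2 * fps_const (real N) + 3"
        by (simp add: fps_numeral_fps_const flip: fps_const_add fps_const_mult)
      have c3: "fps_const (real (N+1)) = fps_const (real N) + 1"
        by (simp add: flip: fps_const_add)
      show ?thesis unfolding r unfolding c1 c2 c3 by (simp add: algebra_simps)
    qed
    also have "\<dots> = ((fps_const wz - fps_const vz * fps_X) * Gt) $$ l"
      unfolding e2 using Suc by (simp add: Gt_def)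
    finally show ?thesis .
  qed
qed

lemma Gt_sq_Dt: "Gt^2 * Dt = 1"
proof -
  have dD: "fps_deriv Dt = - 2 * (fps_const wz - fps_const vz * fps_X)"
    by (simp add: Dt_def fps_deriv_power algebra_simps numeral_2_eq_2)
  have "fps_deriv (Gt^2 * Dt) = 2 * Gt * (Dt * fps_deriv Gt) + Gt^2 * fps_deriv Dt"
    by (simp add: power2_eq_square algebra_simps)
  also have "\<dots> = 0" unfolding Gt_ode dD by (simp add: power2_eq_square algebra_simps)
  finally have "Gt^2 * Dt = fps_const ((Gt^2 * Dt) $$ 0)" by (rule fps_deriv_eq_0_iff[THEN iffD1])
  also have "(Gt^2 * Dt) $$ 0 = 1" by (simp add: Gt_def Dt_def Lz_0 power2_eq_square)
  finally show ?thesis by simp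
qed

definition Psi :: "real fps fps \<Rightarrow> real fps" where
  "Psi F = Abs_fps (\<lambda>n. \<Sum>l\<le>n. F $$ l $$ (n - l))"

definition Tr :: "nat \<Rightarrow> real fps fps \<Rightarrow> real fps" where
  "Tr n F = (\<Sum>l\<le>n. fps_X^l * F $$ l)"

lemma Tr_nth: "m \<le> n \<Longrightarrow> Tr n F $$ m = Psi F $$ m"
proof -
  assume "m \<le> n"
  have "Tr n F $$ m = (\<Sum>l\<le>n. if m < l then 0 else F $$ l $$ (m - l))"
    by (simp add: Tr_def fps_sum_nth fps_X_power_mult_nth)
  also have "\<dots> = (\<Sum>l\<le>m. F $$ l $$ (m - l))"
    using \<open>m \<le> n\<close> by (intro sum.mono_neutral_cong_right) auto
  finally show ?thesis by (simp add: Psi_def)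
qed

lemma mult_nth_local:
  assumes "\<And>i. i \<le> n \<Longrightarrow> A $$ i = A' $$ i" "\<And>i. i \<le> n \<Longrightarrow> B $$ i = B' $$ i"
  shows "(A * B) $$ n = (A' * B') $$ n"
  using assms by (simp add: fps_mult_nth)

lemma Psi_mult: "Psi (F * G) = Psi F * Psi G"
proof (rule fps_ext)
  fix n
  define h where "h i j = (fps_X^(i+j) * (F $$ i * G $$ j)) $$ n" for i j
  have h0: "h i j = 0" if "i + j > n" for i j
    using that by (simp add: h_def fps_X_power_mult_nth)
  have "Psi (F * G) $$ n = Tr n (F * G) $$ n" by (simp add: Tr_nth)
  also have "\<dots> = (\<Sum>l\<le>n. \<Sum>i\<le>l. h i (l - i))"
    by (simp add: Tr_def fps_sum_nth fps_mult_nth h_def sum_distrib_left atLeast0AtMost)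
  also have "\<dots> = (\<Sum>(i,j)\<in>{(i,j). i+j \<le> n}. h i j)"
    by (rule sum.triangle_reindex_eq[symmetric])
  also have "\<dots> = (\<Sum>(i,j)\<in>{..n}\<times>{..n}. h i j)"
    by (intro sum.mono_neutral_left) (auto intro: h0)
  also have "\<dots> = (\<Sum>i\<le>n. \<Sum>j\<le>n. h i j)"
    by (simp add: sum.cartesian_product)
  also have "\<dots> = (Tr n F * Tr n G) $$ n"
    by (simp add: Tr_def sum_product fps_sum_nth h_def power_add mult_ac)
  also have "\<dots> = (Psi F * Psi G) $$ n"
    by (rule mult_nth_local) (simp_all add: Tr_nth)
  finally show "Psi (F * G) $$ n = (Psi F * Psi G) $$ n" .
qed

lemma Psi_add: "Psi (F + G) = Psi F + Psi G"
  by (simp add: Psi_def fps_eq_iff sum.distrib)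

lemma Psi_diff: "Psi (F - G) = Psi F - Psi G"
  by (simp add: Psi_def fps_eq_iff sum_subtractf)

lemma Psi_const: "Psi (fps_const a) = a"
proof (rule fps_ext)
  fix n
  have "(\<Sum>l\<le>n. fps_const a $$ l $$ (n - l)) = (\<Sum>l\<le>n. if l = 0 then a $$ n else 0)"
    by (intro sum.cong) auto
  thus "Psi (fps_const a) $$ n = a $$ n" by (simp add: Psi_def)
qed

lemma Psi_one: "Psi 1 = 1"
  using Psi_const[of 1] by simp

lemma Psi_X: "Psi fps_X = fps_X"
proof (rule fps_ext)
  fix n
  have "(\<Sum>l\<le>n. (fps_X :: real fps fps) $$ l $$ (n - l)) = (\<Sum>l\<le>n. if l = 1 then (if n = 1 then 1 else 0) else 0)"
    by (intro sum.cong) (auto simp: fps_X_def)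
  thus "Psi fps_X $$ n = fps_X $$ n" by (auto simp add: Psi_def fps_X_def)
qed

lemma Psi_power: "Psi (F ^ k) = Psi F ^ k"
  by (induction k) (simp_all add: Psi_one Psi_mult)

definition zx :: "real fps" where "zx = Abs_fps (\<lambda>n. if n = 0 then 0 else 1)"

lemma zx_0 [simp]: "zx $$ 0 = 0" by (simp add: zx_def)

lemma zx_mult: "zx * (1 - fps_X) = fps_X"
proof (rule fps_ext)
  fix n
  have "(zx * (1 - fps_X)) = zx - fps_X * zx" by (simp add: algebra_simps)
  thus "(zx * (1 - fps_X)) $$ n = fps_X $$ n"
    by (cases n) (auto simp: zx_def fps_X_mult_nth fps_X_nth)
qed

definition mapc :: "real fps fps \<Rightarrow> real fps fps" where
  "mapc F = Abs_fps (\<lambda>l. F $$ l oo zx)"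

lemma mapc_mult: "mapc (F * G) = mapc F * mapc G"
  by (simp add: mapc_def fps_eq_iff fps_mult_nth fps_compose_sum_distrib fps_compose_mult_distrib)

lemma mapc_add: "mapc (F + G) = mapc F + mapc G"
  by (simp add: mapc_def fps_eq_iff fps_compose_add_distrib)

lemma mapc_diff: "mapc (F - G) = mapc F - mapc G"
  by (simp add: mapc_def fps_eq_iff fps_compose_sub_distrib)

lemma mapc_const: "mapc (fps_const a) = fps_const (a oo zx)"
  by (simp add: mapc_def fps_eq_iff)

lemma mapc_X: "mapc fps_X = fps_X"
  by (auto simp add: mapc_def fps_eq_iff fps_X_def)

definition Phi where "Phi F = Psi (mapc F)"

lemma Phi_mult: "Phi (F * G) = Phi F * Phi G" by (simp add: Phi_def mapc_mult Psi_mult)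
lemma Phi_add: "Phi (F + G) = Phi F + Phi G" by (simp add: Phi_def mapc_add Psi_add)
lemma Phi_diff: "Phi (F - G) = Phi F - Phi G" by (simp add: Phi_def mapc_diff Psi_diff)
lemma Phi_const: "Phi (fps_const a) = a oo zx" by (simp add: Phi_def mapc_const Psi_const)
lemma Phi_X: "Phi fps_X = fps_X" by (simp add: Phi_def mapc_X Psi_X)
lemma Phi_one: "Phi 1 = 1" using Phi_const[of 1] by simp
lemma Phi_power: "Phi (F ^ k) = Phi F ^ k"
  by (induction k) (simp_all add: Phi_one Phi_mult)

definition Pfps :: "real fps" where "Pfps = Phi Gt"

lemma Pfps_nth: "Pfps $$ n = (\<Sum>l\<le>n. (Lz l oo zx) $$ (n - l))"
  by (simp add: Pfps_def Phi_def Psi_def mapc_def Gt_def)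

definition Qfps :: "real fps" where
  "Qfps = 1 - 4 * fps_X + 4 * fps_X^2 - 4 * fps_X^3 + 4 * fps_X^4"

lemma Pfps_sq: "Pfps^2 * Qfps = (1 - fps_X)^2"
proof -
  have "Phi (Gt^2 * Dt) = 1" by (simp add: Gt_sq_Dt Phi_one)
  hence 1: "Pfps^2 * Phi Dt = 1" by (simp add: Phi_mult Phi_power Pfps_def)
  have wz: "wz oo zx = 1 + zx" by (simp add: wz_def fps_compose_add_distrib)
  have vz: "vz oo zx = (1 - zx)^2"
    by (simp add: vz_def power2_eq_square fps_compose_mult_distrib fps_compose_sub_distrib)
  have two: "(2 :: real fps fps) = fps_const 2" by (simp add: fps_numeral_fps_const)
  have "Phi Dt = 1 - 2 * (1 + zx) * fps_X + (1 - zx)^2 * fps_X^2"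
    unfolding Dt_def two
    by (simp add: Phi_add Phi_diff Phi_mult Phi_power Phi_const Phi_X Phi_one wz vz
        fps_compose_mult_distrib fps_numeral_fps_const)
  hence "(1 - fps_X)^2 * Phi Dt = Qfps"
  proof -
    assume D: "Phi Dt = 1 - 2 * (1 + zx) * fps_X + (1 - zx)^2 * fps_X^2"
    define e :: "real fps" where "e = 1 - fps_X"
    have ae: "zx * e = fps_X" using zx_mult by (simp add: e_def)
    have "(1 - fps_X)^2 * Phi Dt = e^2 - 2 * fps_X * e^2 - 2 * fps_X * (zx * e) * e
       + fps_X^2 * e^2 - 2 * fps_X^2 * (zx * e) * e + fps_X^2 * (zx * e)^2"
      unfolding D e_def by (simp add: algebra_simps power2_eq_square)
    also have "\<dots> = Qfps" unfolding ae unfolding Qfps_def e_def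
      by (simp add: algebra_simps power2_eq_square power3_eq_cube power4_eq_xxxx)
    finally show ?thesis .
  qed
  hence "Pfps^2 * Qfps = (1 - fps_X)^2 * (Pfps^2 * Phi Dt)" by (simp add: algebra_simps)
  thus ?thesis using 1 by simp
qed

lemma length_le_sum_list: "\<forall>x\<in>set c. 0 < (x::nat) \<Longrightarrow> length c \<le> sum_list c"
  by (induction c) auto

lemma Comp_subset: "Comp n \<subseteq> {xs. set xs \<subseteq> {0..n} \<and> length xs \<le> n}"
proof
  fix c assume c: "c \<in> Comp n"
  hence pos: "\<forall>x\<in>set c. 0 < x" and s: "sum_list c = n" by (auto simp: Comp_def)
  have "set c \<subseteq> {0..n}" using s member_le_sum_list[of _ c] by auto
  moreover have "length c \<le> n" using length_le_sum_list[OF pos] s by simp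
  ultimately show "c \<in> {xs. set xs \<subseteq> {0..n} \<and> length xs \<le> n}" by simp
qed

lemma finite_Comp: "finite (Comp n)"
  by (rule finite_subset[OF Comp_subset]) (rule finite_lists_length_le, simp)

lemma Comp_0: "Comp 0 = {[]}"
proof (intro equalityI subsetI)
  fix c assume "c \<in> Comp 0"
  hence "\<forall>x\<in>set c. 0 < x" "sum_list c = 0" unfolding Comp_def by blast+
  hence "length c \<le> 0" using length_le_sum_list[of c] by linarith
  thus "c \<in> {[]}" by simp
qed (auto simp: Comp_def)

lemma Comp_pos: "n \<ge> 1 \<Longrightarrow> Comp n = (\<Union>j\<in>{1..n}. (Cons j) ` Comp (n - j))"
proof (intro equalityI subsetI)
  fix c assume n: "n \<ge> 1" and c: "c \<in> Comp n"
  then obtain j d where cd: "c = j # d" by (cases c) (auto simp: Comp_def)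
  with c have "j \<in> {1..n}" "d \<in> Comp (n - j)" by (auto simp: Comp_def)
  thus "c \<in> (\<Union>j\<in>{1..n}. (Cons j) ` Comp (n - j))" using cd by blast
next
  fix c assume "c \<in> (\<Union>j\<in>{1..n}. (Cons j) ` Comp (n - j))"
  thus "c \<in> Comp n" by (auto simp: Comp_def)
qed

lemma card_Comp_len: "real (card {d \<in> Comp s. length d = i}) = (zx ^ i) $$ s"
proof (induction i arbitrary: s)
  case 0
  have "{d \<in> Comp s. length d = 0} = (if s = 0 then {[]} else {})"
    using Comp_0 by (auto simp: Comp_def)
  thus ?case by simp
next
  case (Suc i)
  show ?case
  proof (cases "s = 0")
    case True
    hence "{d \<in> Comp s. length d = Suc i} = {}" by (auto simp: Comp_0)
    moreover have "(zx ^ Suc i) $$ s = 0" using True by simp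
    ultimately show ?thesis by (metis card.empty of_nat_0)
  next
    case False
    have eq: "{d \<in> Comp s. length d = Suc i} = (\<Union>j\<in>{1..s}. (Cons j) ` {d \<in> Comp (s - j). length d = i})"
      using Comp_pos[of s] False by auto
    have "card {d \<in> Comp s. length d = Suc i} = (\<Sum>j\<in>{1..s}. card ((Cons j) ` {d \<in> Comp (s - j). length d = i}))"
      unfolding eq by (rule card_UN_disjoint) (auto intro: finite_subset[OF _ finite_Comp])
    also have "\<dots> = (\<Sum>j\<in>{1..s}. card {d \<in> Comp (s - j). length d = i})"
      by (intro sum.cong refl card_image) auto
    finally have "real (card {d \<in> Comp s. length d = Suc i}) = (\<Sum>j\<in>{1..s}. (zx ^ i) $$ (s - j))"
      using Suc by simp
    also have "\<dots> = (\<Sum>j=0..s. zx $$ j * (zx ^ i) $$ (s - j))"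
      by (subst sum.atLeast_Suc_atMost) (auto simp: zx_def intro!: sum.cong)
    also have "\<dots> = (zx ^ Suc i) $$ s" by (simp add: fps_mult_nth)
    finally show ?thesis .
  qed
qed

lemma card_Comp: "n \<ge> 1 \<Longrightarrow> card (Comp n) = 2 ^ (n - 1)"
proof (induction n rule: less_induct)
  case (less n)
  have "card (Comp n) = (\<Sum>j\<in>{1..n}. card ((Cons j) ` Comp (n - j)))"
    unfolding Comp_pos[OF less.prems] by (rule card_UN_disjoint) (auto intro: finite_Comp)
  also have "\<dots> = (\<Sum>j\<in>{1..n}. card (Comp (n - j)))"
    by (intro sum.cong refl card_image) auto
  also have "\<dots> = (\<Sum>k<n. card (Comp k))"
    by (rule sum.reindex_bij_witness[of _ "\<lambda>k. n - k" "\<lambda>j. n - j"]) auto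
  also have "\<dots> = 2 ^ (n - 1)"
  proof -
    have "\<forall>k. k < n \<longrightarrow> (\<Sum>i<Suc k. card (Comp i)) = 2 ^ k"
    proof (intro allI impI)
      fix k assume "k < n"
      thus "(\<Sum>i<Suc k. card (Comp i)) = 2 ^ k"
      proof (induction k)
        case 0 thus ?case by (simp add: Comp_0)
      next
        case (Suc k)
        hence "card (Comp (Suc k)) = 2 ^ k" using less.IH[of "Suc k"] by simp
        thus ?case using Suc by simp
      qed
    qed
    thus ?thesis using less.prems by (cases n) auto
  qed
  finally show ?case .
qed

lemma card_filter_nz:
  assumes "\<forall>x\<in>set d. x \<noteq> (0::nat)"
  shows "card {e. length e = l \<and> filter (\<lambda>x. x \<noteq> 0) e = d} = l choose length d"
  using assms
proof (induction l arbitrary: d)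
  case 0
  have "{e. length e = 0 \<and> filter (\<lambda>x. x \<noteq> 0) e = d} = (if d = [] then {[]} else {})" by auto
  thus ?case by simp
next
  case (Suc l)
  define S where "S d' = {e. length e = l \<and> filter (\<lambda>x. x \<noteq> (0::nat)) e = d'}" for d'
  have fin: "finite (S d')" for d'
  proof (rule finite_subset)
    show "S d' \<subseteq> {xs. set xs \<subseteq> insert 0 (set d') \<and> length xs = l}"
    proof
      fix e assume "e \<in> S d'"
      hence "length e = l" "filter (\<lambda>x. x \<noteq> 0) e = d'" by (auto simp: S_def)
      moreover have "set e \<subseteq> insert 0 (set (filter (\<lambda>x. x \<noteq> 0) e))" by auto
      ultimately show "e \<in> {xs. set xs \<subseteq> insert 0 (set d') \<and> length xs = l}" by auto
    qed
  qed (rule finite_lists_length_eq, simp)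
  show ?case
  proof (cases d)
    case Nil
    have "{e. length e = Suc l \<and> filter (\<lambda>x. x \<noteq> 0) e = d} = (Cons 0) ` S d"
    proof (intro equalityI subsetI)
      fix e assume e: "e \<in> {e. length e = Suc l \<and> filter (\<lambda>x. x \<noteq> 0) e = d}"
      then obtain a e' where "e = a # e'" by (cases e) auto
      with e Nil show "e \<in> (Cons 0) ` S d" by (auto simp: S_def split: if_splits)
    qed (auto simp: S_def)
    hence "card {e. length e = Suc l \<and> filter (\<lambda>x. x \<noteq> 0) e = d} = card (S d)"
      by (simp add: card_image)
    also have "\<dots> = l choose length d" using Suc by (simp add: S_def)
    finally show ?thesis using Nil by simp
  next
    case (Cons b d')
    have b: "b \<noteq> 0" and d': "\<forall>x\<in>set d'. x \<noteq> 0" using Suc.prems Cons by auto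
    have "{e. length e = Suc l \<and> filter (\<lambda>x. x \<noteq> 0) e = d} = (Cons 0) ` S d \<union> (Cons b) ` S d'"
    proof (intro equalityI subsetI)
      fix e assume e: "e \<in> {e. length e = Suc l \<and> filter (\<lambda>x. x \<noteq> 0) e = d}"
      then obtain a e' where "e = a # e'" by (cases e) auto
      with e Cons show "e \<in> (Cons 0) ` S d \<union> (Cons b) ` S d'" by (auto simp: S_def split: if_splits)
    qed (use b Cons in \<open>auto simp: S_def\<close>)
    hence "card {e. length e = Suc l \<and> filter (\<lambda>x. x \<noteq> 0) e = d} = card ((Cons 0) ` S d) + card ((Cons b) ` S d')"
      using b fin by (simp add: card_Un_disjoint, subst card_Un_disjoint) auto
    also have "\<dots> = card (S d) + card (S d')" by (simp add: card_image)
    also have "\<dots> = (l choose length d) + (l choose length d')"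
      using Suc.IH Suc.prems d' by (simp add: S_def)
    finally show ?thesis using Cons by simp
  qed
qed

lemma carolina_Cons: "carolina (a # c) = Suc (length c) # filter (\<lambda>x. x \<noteq> 0) (map (\<lambda>x. x - 1) (a # c))"
  by (simp add: carolina_def)

lemma sum_list_minus1: "\<forall>x\<in>set c. 0 < (x::nat) \<Longrightarrow> sum_list c = length c + sum_list (map (\<lambda>x. x - 1) c)"
  by (induction c) auto

lemma sum_list_filter_nz: "sum_list (filter (\<lambda>x. x \<noteq> (0::nat)) e) = sum_list e"
  by (induction e) auto

lemma fiber_card:
  assumes n: "n \<ge> 1" and y: "l # d \<in> Comp n"
  shows "card {c \<in> Comp n. carolina c = l # d} = l choose length d"
proof -
  have dpos: "\<forall>x\<in>set d. x \<noteq> 0" using y by (auto simp: Comp_def)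
  have sy: "l + sum_list d = n" using y by (simp add: Comp_def)
  have lpos: "l \<ge> 1" using y by (auto simp: Comp_def)
  have "{c \<in> Comp n. carolina c = l # d} = map Suc ` {e. length e = l \<and> filter (\<lambda>x. x \<noteq> 0) e = d}"
  proof (intro equalityI subsetI)
    fix c assume c: "c \<in> {c \<in> Comp n. carolina c = l # d}"
    hence pos: "\<forall>x\<in>set c. 0 < x" and cs: "sum_list c = n" and cc: "carolina c = l # d"
      by (auto simp: Comp_def)
    from cs n obtain a c' where ac: "c = a # c'" by (cases c) auto
    from cc ac have len: "length c = l" and fl: "filter (\<lambda>x. x \<noteq> 0) (map (\<lambda>x. x - 1) c) = d"
      by (simp_all only: carolina_Cons list.inject length_Cons) 
    have cm: "c = map Suc (map (\<lambda>x. x - 1) c)" using pos by (induction c) auto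
    show "c \<in> map Suc ` {e. length e = l \<and> filter (\<lambda>x. x \<noteq> 0) e = d}"
      using len fl by (intro image_eqI[where x="map (\<lambda>x. x - 1) c" and f="map Suc", OF cm]) simp
  next
    fix c assume "c \<in> map Suc ` {e. length e = l \<and> filter (\<lambda>x. x \<noteq> 0) e = d}"
    then obtain e where ce: "c = map Suc e" and le: "length e = l" and fe: "filter (\<lambda>x. x \<noteq> 0) e = d"
      by auto
    have me: "map (\<lambda>x. x - 1) c = e" using ce by (induction e arbitrary: c) auto
    have pos: "\<forall>x\<in>set c. 0 < x" using ce by auto
    have "sum_list c = length c + sum_list e" using sum_list_minus1[OF pos] me by simp
    also have "\<dots> = l + sum_list d" using le ce fe sum_list_filter_nz[of e] by simp
    finally have sc: "sum_list c = n" using sy by simp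
    from le lpos ce obtain a c' where ac: "c = a # c'" by (cases e) auto
    have lc: "length c = l" using ce le by simp
    have "carolina c = l # d" using ac me lc fe by (simp add: carolina_Cons)
    thus "c \<in> {c \<in> Comp n. carolina c = l # d}" using pos sc by (simp add: Comp_def)
  qed
  hence "card {c \<in> Comp n. carolina c = l # d} = card {e. length e = l \<and> filter (\<lambda>x. x \<noteq> 0) e = d}"
    by (simp add: card_image inj_on_def)
  also have "\<dots> = l choose length d" by (rule card_filter_nz[OF dpos])
  finally show ?thesis .
qed

lemma sum_Comp_len:
  "(\<Sum>d\<in>Comp s. real (l choose length d)^2) = (Lz l oo zx) $$ s"
proof -
  have "(\<Sum>d\<in>Comp s. real (l choose length d)^2) =
        (\<Sum>i\<in>{0..s}. \<Sum>d\<in>{d\<in>Comp s. length d = i}. real (l choose length d)^2)"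
  proof (rule sum.group[symmetric])
    show "finite (Comp s)" by (rule finite_Comp)
    show "length ` Comp s \<subseteq> {0..s}"
      using length_le_sum_list by (auto simp: Comp_def)
  qed simp
  also have "\<dots> = (\<Sum>i\<in>{0..s}. real (l choose i)^2 * real (card {d\<in>Comp s. length d = i}))"
    by (intro sum.cong refl) simp
  also have "\<dots> = (\<Sum>i=0..s. Lz l $$ i * (zx ^ i) $$ s)"
    by (simp add: card_Comp_len Lz_def)
  also have "\<dots> = (Lz l oo zx) $$ s" by (simp add: fps_compose_nth)
  finally show ?thesis .
qed

lemma part1:
  assumes n: "n \<ge> 1"
  shows "map_deg carolina (Comp n) (Comp n) = Pfps $$ n / 2 ^ (n - 1)"
proof -
  define f where "f y = real (card {c \<in> Comp n. carolina c = y})^2" for y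
  have U: "Comp n = (\<Union>l\<in>{1..n}. (Cons l) ` Comp (n - l))" by (rule Comp_pos[OF n])
  have "(\<Sum>y\<in>Comp n. real (card {c \<in> Comp n. carolina c = y})^2) = sum f (Comp n)"
    by (simp add: f_def)
  also have "\<dots> = sum f (\<Union>l\<in>{1..n}. (Cons l) ` Comp (n - l))"
    by (simp only: U[symmetric])
  also have "\<dots> = (\<Sum>l\<in>{1..n}. \<Sum>y\<in>(Cons l) ` Comp (n - l). f y)"
    by (rule sum.UNION_disjoint) (auto intro: finite_Comp)
  also have "\<dots> = (\<Sum>l\<in>{1..n}. \<Sum>d\<in>Comp (n - l). real (card {c \<in> Comp n. carolina c = l # d})^2)"
  proof (rule sum.cong[OF refl])
    fix l assume "l \<in> {1..n}"
    have "inj_on (Cons l) (Comp (n - l))" by (simp add: inj_on_def)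
    thus "sum f ((Cons l) ` Comp (n - l)) = (\<Sum>d\<in>Comp (n - l). real (card {c \<in> Comp n. carolina c = l # d})^2)"
      by (simp add: sum.reindex f_def)
  qed
  also have "\<dots> = (\<Sum>l\<in>{1..n}. \<Sum>d\<in>Comp (n - l). real (l choose length d)^2)"
  proof (rule sum.cong[OF refl], rule sum.cong[OF refl])
    fix l d assume l: "l \<in> {1..n}" and d: "d \<in> Comp (n - l)"
    have "l # d \<in> Comp n" using l d by (auto simp: Comp_def)
    thus "real (card {c \<in> Comp n. carolina c = l # d})^2 = real (l choose length d)^2"
      using fiber_card[OF n] by simp
  qed
  also have "\<dots> = (\<Sum>l\<in>{1..n}. (Lz l oo zx) $$ (n - l))"
    by (simp add: sum_Comp_len)
  also have "\<dots> = Pfps $$ n"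
  proof -
    have "Pfps $$ n = (\<Sum>l\<in>insert 0 {1..n}. (Lz l oo zx) $$ (n - l))"
      unfolding Pfps_nth by (intro sum.cong) auto
    also have "\<dots> = (Lz 0 oo zx) $$ n + (\<Sum>l\<in>{1..n}. (Lz l oo zx) $$ (n - l))"
      by (subst sum.insert) auto
    also have "(Lz 0 oo zx) $$ n = 0" using n by (simp add: Lz_0)
    finally show ?thesis by simp
  qed
  finally have num: "(\<Sum>y\<in>Comp n. real (card {c \<in> Comp n. carolina c = y})^2) = Pfps $$ n" .
  show ?thesis unfolding map_deg_def num card_Comp[OF n] by simp
qed

lemma Pfps_0: "Pfps $$ 0 = 1"
  by (simp add: Pfps_nth Lz_0)

lemma quartic_fps_eq: "quartic_fps = Qfps"
  by (simp add: quartic_fps_def Qfps_def)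

definition Rfps :: "real fps" where "Rfps = fps_radical (\<lambda>k x. root k x) 2 quartic_fps"

lemma Rfps_sq: "Rfps^2 = Qfps"
proof -
  have q0: "quartic_fps $$ 0 = 1" by (simp add: quartic_fps_def)
  have "(fps_radical (\<lambda>k x. root k x) (Suc 1) quartic_fps) ^ (Suc 1) = quartic_fps"
    using power_radical[of quartic_fps "\<lambda>k x. root k x" 1] q0 by simp
  thus ?thesis by (simp add: Rfps_def quartic_fps_eq numeral_2_eq_2)
qed

lemma Rfps_0: "Rfps $$ 0 = 1"
  by (simp add: Rfps_def quartic_fps_def)

lemma PR: "Pfps * Rfps = 1 - fps_X"
proof -
  have "(Pfps * Rfps)^2 = (1 - fps_X)^2"
    using Pfps_sq Rfps_sq by (simp add: power_mult_distrib)
  hence "(Pfps * Rfps - (1 - fps_X)) * (Pfps * Rfps + (1 - fps_X)) = 0"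
    by (simp add: algebra_simps power2_eq_square)
  moreover have "(Pfps * Rfps + (1 - fps_X)) \<noteq> 0"
  proof
    assume "Pfps * Rfps + (1 - fps_X) = 0"
    hence "(Pfps * Rfps + (1 - fps_X)) $$ 0 = 0" by simp
    thus False by (simp add: Pfps_0 Rfps_0)
  qed
  ultimately show ?thesis by simp
qed

lemma eta_fps_eq: "eta_fps = Pfps"
proof -
  have "eta_fps = (1 - fps_X) * inverse Rfps" unfolding eta_fps_def Rfps_def by (rule refl)
  also have "\<dots> = Pfps * (Rfps * inverse Rfps)" unfolding PR[symmetric] by (simp add: mult.assoc)
  also have "\<dots> = Pfps" using inverse_mult_eq_1'[of Rfps] Rfps_0 by simp
  finally show ?thesis .
qed

lemma part1_eta: "n \<ge> 1 \<Longrightarrow> map_deg carolina (Comp n) (Comp n) = eta n / 2 ^ (n - 1)"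
  by (simp add: part1 eta_def eta_fps_eq)

definition cc :: "nat \<Rightarrow> real" where "cc n = (-1)^n * ((-1/2 :: real) gchoose n)"

lemma cc_0: "cc 0 = 1" by (simp add: cc_def)

lemma cc_Suc: "cc (Suc n) = cc n * (2 * real n + 1) / (2 * real n + 2)"
proof -
  have "(-1/2 :: real) * ((-1/2) gchoose n) = of_nat n * ((-1/2) gchoose n) + of_nat (Suc n) * ((-1/2) gchoose (Suc n))"
    by (rule gbinomial_mult_1)
  hence "(real n + 1) * ((-1/2 :: real) gchoose (Suc n)) = - (real n + 1/2) * ((-1/2) gchoose n)"
    by (simp add: algebra_simps)
  hence hB: "((-1/2 :: real) gchoose (Suc n)) = - ((-1/2) gchoose n) * (2 * real n + 1) / (2 * real n + 2)"
    by (simp add: field_simps)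
  show ?thesis unfolding cc_def power_Suc hB by simp
qed

lemma cc_pos: "cc n > 0"
  by (induction n) (simp_all add: cc_0 cc_Suc)

lemma cc_le1: "cc n \<le> 1"
proof (induction n)
  case 0 thus ?case by (simp add: cc_0)
next
  case (Suc n)
  have "(2 * real n + 1) / (2 * real n + 2) \<le> 1" by simp
  hence "cc n * ((2 * real n + 1) / (2 * real n + 2)) \<le> 1 * 1"
    using Suc cc_pos[of n] by (intro mult_mono) auto
  thus ?case by (simp add: cc_Suc)
qed

lemma cc_lower: "cc n \<ge> 1 / (2 * real n + 1)"
proof (induction n)
  case 0 thus ?case by (simp add: cc_0)
next
  case (Suc n)
  have "cc (Suc n) = cc n * ((2 * real n + 1) / (2 * real n + 2))" by (simp add: cc_Suc)
  also have "\<dots> \<ge> 1 / (2 * real n + 1) * ((2 * real n + 1) / (2 * real n + 2))"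
    using Suc by (intro mult_right_mono) auto
  finally have "cc (Suc n) \<ge> 1 / (2 * real n + 2)" by simp
  moreover have "1 / (2 * real n + 2) \<ge> 1 / (2 * real (Suc n) + 1)" by (simp add: frac_le)
  ultimately show ?case by linarith
qed

lemma cc_supermult: "cc m * cc j \<le> cc (m + j)"
proof (induction j)
  case 0 thus ?case by (simp add: cc_0)
next
  case (Suc j)
  have f: "(2 * real j + 1) / (2 * real j + 2) \<le> (2 * real (m + j) + 1) / (2 * real (m + j) + 2)"
    by (simp add: field_simps)
  have "cc m * cc (Suc j) = (cc m * cc j) * ((2 * real j + 1) / (2 * real j + 2))"
    by (simp add: cc_Suc)
  also have "\<dots> \<le> cc (m + j) * ((2 * real (m + j) + 1) / (2 * real (m + j) + 2))"
    using Suc f cc_pos[of m] cc_pos[of j] cc_pos[of "m+j"] by (intro mult_mono) (auto intro: mult_nonneg_nonneg)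
  also have "\<dots> = cc (m + Suc j)" by (simp add: cc_Suc)
  finally show ?case .
qed

lemma cc_ratio_bound: "j \<le> n \<Longrightarrow> cc (n - j) / cc n \<le> 2 * real j + 1"
proof -
  assume "j \<le> n"
  hence "cc (n - j) * cc j \<le> cc n" using cc_supermult[of "n - j" j] by simp
  hence "cc (n - j) / cc n \<le> 1 / cc j" using cc_pos[of n] cc_pos[of j]
    by (simp add: field_simps)
  also have "\<dots> \<le> 2 * real j + 1" using cc_lower[of j] cc_pos[of j]
    by (simp add: field_simps)
  finally show ?thesis .
qed

lemma cc_asymp: "(\<lambda>n. cc n * sqrt (real n)) \<longlonglongrightarrow> 1 / sqrt pi"
proof -
  have "(\<lambda>n. ((-1/2::real) gchoose n) / ((-1)^n / exp ((-1/2+1) * of_real (ln (real n))))) \<longlonglongrightarrow>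
           inverse (Gamma (- (-1/2::real)))"
    by (rule gbinomial_asymptotic)
  also have "inverse (Gamma (- (-1/2::real))) = 1 / sqrt pi"
  proof -
    have h: "- (-1/2::real) = 1/2" by simp
    show ?thesis unfolding h Gamma_one_half_real by (simp only: inverse_eq_divide)
  qed
  finally have lim: "(\<lambda>n. ((-1/2::real) gchoose n) / ((-1)^n / exp ((-1/2+1) * of_real (ln (real n))))) \<longlonglongrightarrow> 1 / sqrt pi" .
  show ?thesis
  proof (rule Lim_transform_eventually[OF lim])
    show "\<forall>\<^sub>F n in sequentially. ((-1/2::real) gchoose n) / ((-1)^n / exp ((-1/2+1) * of_real (ln (real n)))) = cc n * sqrt (real n)"
      using eventually_gt_at_top[of "0::nat"]
    proof eventually_elim
      case (elim n)
      have "exp ((-1/2+1) * ln (real n)) = real n powr (1/2)"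
        using elim by (simp add: powr_def)
      also have "\<dots> = sqrt (real n)" using elim by (simp add: powr_half_sqrt)
      finally have "exp ((-1/2+1) * ln (real n)) = sqrt (real n)" .
      have sg: "((-1::real)^n) * ((-1)^n) = 1" by (simp flip: power_mult_distrib)
      have "((-1/2::real) gchoose n) / ((-1)^n / exp ((-1/2+1) * of_real (ln (real n))))
          = ((-1/2::real) gchoose n) * sqrt (real n) / (-1)^n"
        using \<open>exp ((-1/2+1) * ln (real n)) = sqrt (real n)\<close> by simp
      also have "\<dots> = cc n * sqrt (real n)" by (cases "even n") (simp_all add: cc_def)
      finally show ?case .
    qed
  qed
qed

lemma summable_lin_geom:
  fixes q :: real assumes "0 \<le> q" "q < 1"
  shows "summable (\<lambda>n. real (Suc n) * q ^ n)"
proof -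
  have "summable (\<lambda>n. diffs (\<lambda>_. 1::real) n * q ^ n)"
    by (rule termdiff_converges[where K=1]) (use assms in \<open>auto intro: summable_geometric\<close>)
  thus ?thesis by (simp add: diffs_def)
qed

lemma cc_shift_lim: "(\<lambda>n. cc (n - j) / cc n) \<longlonglongrightarrow> 1"
proof (rule LIMSEQ_offset[where k="Suc j"])
  define f where "f n = cc n * sqrt (real n)" for n
  have f: "f \<longlonglongrightarrow> 1 / sqrt pi" unfolding f_def by (rule cc_asymp)
  have f1: "(\<lambda>m. f (Suc m)) \<longlonglongrightarrow> 1 / sqrt pi" using LIMSEQ_ignore_initial_segment[OF f, of 1] by simp
  have f2: "(\<lambda>m. f (m + Suc j)) \<longlonglongrightarrow> 1 / sqrt pi"
    using LIMSEQ_ignore_initial_segment[OF f, of "Suc j"] by simp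
  have r: "(\<lambda>m. sqrt ((real m + real (Suc j)) / (real m + 1))) \<longlonglongrightarrow> sqrt 1"
  proof (intro tendsto_real_sqrt)
    have i0: "(\<lambda>m. inverse (real m + 1)) \<longlonglongrightarrow> 0"
      using LIMSEQ_inverse_real_of_nat by (simp add: add.commute)
    have "(\<lambda>m. 1 + real j * inverse (real m + 1)) \<longlonglongrightarrow> 1 + real j * 0"
      by (intro tendsto_intros i0)
    moreover have "(\<lambda>m. 1 + real j * inverse (real m + 1)) = (\<lambda>m. (real m + real (Suc j)) / (real m + 1))"
      by (rule ext) (simp add: field_simps)
    ultimately show "(\<lambda>m. (real m + real (Suc j)) / (real m + 1)) \<longlonglongrightarrow> 1" by simp
  qed
  have pi0: "1 / sqrt pi \<noteq> 0" by simp
  have "(\<lambda>m. f (Suc m) / f (m + Suc j) * sqrt ((real m + real (Suc j)) / (real m + 1)))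
        \<longlonglongrightarrow> (1 / sqrt pi) / (1 / sqrt pi) * sqrt 1"
    by (intro tendsto_intros f1 f2 r pi0)
  hence lim: "(\<lambda>m. f (Suc m) / f (m + Suc j) * sqrt ((real m + real (Suc j)) / (real m + 1))) \<longlonglongrightarrow> 1"
    by simp
  show "(\<lambda>n. cc (n + Suc j - j) / cc (n + Suc j)) \<longlonglongrightarrow> 1"
  proof (rule Lim_transform_eventually[OF lim], intro always_eventually allI)
    fix m
    have e1: "n + Suc j - j = Suc n" for n by simp
    have pos: "cc (Suc m) > 0" "cc (m + Suc j) > 0" by (rule cc_pos)+
    have "f (Suc m) / f (m + Suc j) * sqrt ((real m + real (Suc j)) / (real m + 1))
        = cc (Suc m) / cc (m + Suc j) * (sqrt (real m + 1) / sqrt (real m + real (Suc j))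
           * sqrt ((real m + real (Suc j)) / (real m + 1)))"
      by (simp add: f_def field_simps)
    also have "sqrt (real m + 1) / sqrt (real m + real (Suc j))
           * sqrt ((real m + real (Suc j)) / (real m + 1)) = 1"
      by (simp add: real_sqrt_divide field_simps)
    finally show "f (Suc m) / f (m + Suc j) * sqrt ((real m + real (Suc j)) / (real m + 1))
        = cc (m + Suc j - j) / cc (m + Suc j)" by simp
  qed
qed

lemma conv_lim:
  fixes \<beta> :: "nat \<Rightarrow> real"
  assumes q: "0 \<le> q" "q < 1" and b: "\<And>j. \<bar>\<beta> j\<bar> \<le> B * q ^ j"
  shows "(\<lambda>n. (\<Sum>k\<le>n. cc k * \<beta> (n - k)) / cc n) \<longlonglongrightarrow> (\<Sum>j. \<beta> j)"
proof -
  define a where "a j n = (if j \<le> n then cc (n - j) / cc n * \<beta> j else 0)" for j n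
  define M where "M j = 2 * B * (real (Suc j) * q ^ j)" for j
  have lim: "(\<lambda>n. a j n) \<longlonglongrightarrow> \<beta> j" for j
  proof -
    have "(\<lambda>n. cc (n - j) / cc n * \<beta> j) \<longlonglongrightarrow> 1 * \<beta> j"
      by (intro tendsto_intros cc_shift_lim)
    moreover have "eventually (\<lambda>n. cc (n - j) / cc n * \<beta> j = a j n) sequentially"
      using eventually_ge_at_top[of j] by eventually_elim (simp add: a_def)
    ultimately show ?thesis by (simp add: Lim_transform_eventually)
  qed
  have bound: "norm (a j n) \<le> M j" for j n
  proof (cases "j \<le> n")
    case True
    have "\<bar>cc (n - j) / cc n * \<beta> j\<bar> = cc (n - j) / cc n * \<bar>\<beta> j\<bar>"
      using cc_pos[of n] cc_pos[of "n-j"] by (simp add: abs_mult)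
    also have "\<dots> \<le> (2 * real j + 1) * (B * q ^ j)"
      using cc_ratio_bound[OF True] b[of j] cc_pos[of n] cc_pos[of "n-j"]
      by (intro mult_mono) auto
    also have "\<dots> \<le> M j" unfolding M_def using b[of j] q
      by (simp add: algebra_simps)
    finally show ?thesis using True by (simp add: a_def)
  next
    case False
    have "0 \<le> B * q ^ j" using b[of j] by (meson abs_ge_zero order.trans)
    hence "0 \<le> (B * q ^ j) * real (Suc j)" by simp
    hence "0 \<le> M j" unfolding M_def by (simp add: algebra_simps)
    thus ?thesis using False by (simp add: a_def)
  qed
  have sM: "summable M" unfolding M_def by (intro summable_mult summable_lin_geom q)
  have T: "((\<lambda>n. suminf (\<lambda>j. a j n)) \<longlonglongrightarrow> suminf \<beta>)"
    using tannerys_theorem[where a=a and b=\<beta> and M=M and F=sequentially, OF lim _ sM]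
    using bound by (auto intro: always_eventually)
  have eq: "suminf (\<lambda>j. a j n) = (\<Sum>k\<le>n. cc k * \<beta> (n - k)) / cc n" for n
  proof -
    have "suminf (\<lambda>j. a j n) = (\<Sum>j\<le>n. a j n)"
      by (rule suminf_finite) (auto simp: a_def)
    also have "\<dots> = (\<Sum>j\<le>n. cc (n - j) * \<beta> j) / cc n"
      by (simp add: a_def sum_divide_distrib)
    also have "(\<Sum>j\<le>n. cc (n - j) * \<beta> j) = (\<Sum>k\<le>n. cc k * \<beta> (n - k))"
      by (rule sum.reindex_bij_witness[of _ "\<lambda>k. n - k" "\<lambda>k. n - k"]) auto
    finally show ?thesis .
  qed
  show ?thesis using T unfolding eq .
qed

lemma quartic_alt: "quartic x = (1 - 2*x)^2 - 4 * x^3 * (1 - x)"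
  unfolding quartic_def by (simp add: algebra_simps power2_eq_square power3_eq_cube power4_eq_xxxx)

lemma quartic_lb:
  assumes "0 \<le> a" "a \<le> x" "x \<le> b" "b \<le> 1/2"
  shows "quartic x \<ge> (1 - 2*b)^2 - 4 * b^3 * (1 - a)"
proof -
  have "(1 - 2*b)^2 \<le> (1 - 2*x)^2" using assms by (intro power_mono) auto
  moreover have "x^3 * (1 - x) \<le> b^3 * (1 - a)"
    using assms by (intro mult_mono power_mono) auto
  ultimately show ?thesis unfolding quartic_alt by linarith
qed

lemma quartic_pos: "0 \<le> x \<Longrightarrow> x \<le> 0.338 \<Longrightarrow> quartic x > 0"
proof -
  assume x: "0 \<le> x" "x \<le> 0.338"
  consider "x \<le> 0.3" | "0.3 \<le> x" "x \<le> 0.33" | "0.33 \<le> x" by linarith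
  thus ?thesis
  proof cases
    case 1
    have "quartic x \<ge> (1 - 2*0.3)^2 - 4 * 0.3^3 * (1 - 0)" using x 1 by (intro quartic_lb) auto
    thus ?thesis by (simp add: power_divide)
  next
    case 2
    have "quartic x \<ge> (1 - 2*0.33)^2 - 4 * 0.33^3 * (1 - 0.3)" using x 2 by (intro quartic_lb) auto
    thus ?thesis by (simp add: power_divide)
  next
    case 3
    have "quartic x \<ge> (1 - 2*0.338)^2 - 4 * 0.338^3 * (1 - 0.33)" using x 3 by (intro quartic_lb) auto
    thus ?thesis by (simp add: power_divide)
  qed
qed

lemma rho_bounds:
  assumes "0 < \<rho>" "quartic \<rho> = 0" "\<forall>x. 0 < x \<and> x < \<rho> \<longrightarrow> quartic x \<noteq> 0"
  shows "0.338 < \<rho>" "\<rho> \<le> 0.341"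
proof -
  show "0.338 < \<rho>" using quartic_pos[of \<rho>] assms by force
  have c: "continuous_on {0.338..0.341} quartic" unfolding quartic_def by (intro continuous_intros)
  have "quartic 0.341 \<le> 0" "0 \<le> quartic 0.338" by (simp_all add: quartic_def power_divide)
  then obtain x where x: "0.338 \<le> x" "x \<le> 0.341" "quartic x = 0"
    using IVT2'[of quartic "0.341" 0 "0.338", OF _ _ _ c] by auto
  show "\<rho> \<le> 0.341"
  proof (rule ccontr)
    assume "\<not> \<rho> \<le> 0.341"
    hence "0 < x \<and> x < \<rho>" using x by auto
    thus False using assms(3) x(3) by blast
  qed
qed

lemma supp_sum_le:
  fixes f :: "nat \<Rightarrow> real"
  assumes "\<And>i. f i \<ge> 0" "\<And>i. i \<notin> {1,2,3} \<Longrightarrow> f i = 0" and that: "finite A"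
  shows "(\<Sum>i\<in>A. f i) \<le> f 1 + f 2 + f 3"
proof -
  have "(\<Sum>i\<in>A. f i) = (\<Sum>i\<in>A \<inter> {1,2,3}. f i)"
    using that assms(2) by (intro sum.mono_neutral_right) auto
  also have "\<dots> \<le> (\<Sum>i\<in>{1,2,3}. f i)"
    using assms(1) by (intro sum_mono2) auto
  also have "\<dots> = f 1 + f 2 + f 3" by simp
  finally show ?thesis .
qed

lemma K_bound:
  fixes K E :: "real fps" and R :: real
  assumes R: "0 < R" "R \<le> 1"
  and E0: "\<And>i. i \<notin> {1,2,3} \<Longrightarrow> E $$ i = 0"
  and Es: "\<bar>E $$ 1\<bar> * R + \<bar>E $$ 2\<bar> * R^2 + \<bar>E $$ 3\<bar> * R^3 \<le> 2/3"
  and ode: "2 * (1 + E) * fps_deriv K + fps_deriv E * K = 0"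
  and K0: "\<bar>K $$ 0\<bar> \<le> 1"
  shows "\<bar>K $$ n\<bar> * R^n \<le> 1"
proof (induction n rule: less_induct)
  case (less n)
  show ?case
  proof (cases n)
    case 0 thus ?thesis using K0 by simp
  next
    case (Suc m)
    define e where "e = \<bar>E $$ 1\<bar> * R + \<bar>E $$ 2\<bar> * R^2 + \<bar>E $$ 3\<bar> * R^3"
    have IH: "\<bar>K $$ j\<bar> \<le> 1 / R^j" if "j \<le> m" for j
      using less.IH[of j] that Suc R by (simp add: field_simps)
    have c: "(2 * fps_deriv K) $$ m + (2 * (E * fps_deriv K)) $$ m + (fps_deriv E * K) $$ m = 0"
    proof -
      have "2 * (1 + E) * fps_deriv K + fps_deriv E * K = 2 * fps_deriv K + 2 * (E * fps_deriv K) + fps_deriv E * K"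
        by (simp add: algebra_simps)
      thus ?thesis using ode by (metis fps_add_nth fps_zero_nth)
    qed
    have two: "\<And>F :: real fps. (2 * F) $$ m = 2 * F $$ m"
      by (simp add: fps_numeral_fps_const)
    have c2: "2 * (real (m+1) * K $$ (m+1)) = - (2 * (\<Sum>i=0..m. E $$ i * (real (m - i + 1) * K $$ (m - i + 1)))
          + (\<Sum>i=0..m. (real (i+1) * E $$ (i+1)) * K $$ (m - i)))"
    proof -
      have d1: "(2 * fps_deriv K) $$ m = 2 * (real (m+1) * K $$ (m+1))" by (simp only: two fps_deriv_nth)
      have d2: "(2 * (E * fps_deriv K)) $$ m = 2 * (\<Sum>i=0..m. E $$ i * (real (m - i + 1) * K $$ (m - i + 1)))"
        unfolding two by (simp only: fps_mult_nth fps_deriv_nth)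
      have d3: "(fps_deriv E * K) $$ m = (\<Sum>i=0..m. (real (i+1) * E $$ (i+1)) * K $$ (m - i))"
        by (simp only: fps_mult_nth fps_deriv_nth)
      show ?thesis using c unfolding d1 d2 d3 by linarith
    qed
    define S1 where "S1 = (\<Sum>i=0..m. \<bar>E $$ i\<bar> * R^i)"
    define S2 where "S2 = (\<Sum>i=0..m. \<bar>E $$ (i+1)\<bar> * R^(i+1))"
    have S1: "S1 \<le> e"
    proof -
      have "S1 \<le> \<bar>E $$ 1\<bar> * R^1 + \<bar>E $$ 2\<bar> * R^2 + \<bar>E $$ 3\<bar> * R^3" unfolding S1_def
        by (rule supp_sum_le[where f="\<lambda>i. \<bar>E $$ i\<bar> * R^i"]) (use R E0 in auto)
      thus ?thesis by (simp add: e_def)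
    qed
    have S2: "S2 \<le> e"
    proof -
      have "S2 = (\<Sum>i\<in>Suc ` {0..m}. \<bar>E $$ i\<bar> * R^i)" unfolding S2_def
        by (subst sum.reindex) auto
      also have "\<dots> \<le> \<bar>E $$ 1\<bar> * R^1 + \<bar>E $$ 2\<bar> * R^2 + \<bar>E $$ 3\<bar> * R^3"
        by (rule supp_sum_le[where f="\<lambda>i. \<bar>E $$ i\<bar> * R^i"]) (use R E0 in auto)
      also have "\<dots> = e" by (simp add: e_def)
      finally show ?thesis .
    qed
    have b1: "\<bar>E $$ i * (real (m - i + 1) * K $$ (m - i + 1))\<bar> \<le> real (m+1) / R^(m+1) * (\<bar>E $$ i\<bar> * R^i)"
      if "i \<in> {0..m}" for i
    proof (cases "i = 0")
      case True thus ?thesis using E0[of 0] R by simp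
    next
      case False
      hence le: "m - i + 1 \<le> m" using that by auto
      have "\<bar>E $$ i * (real (m - i + 1) * K $$ (m - i + 1))\<bar> = \<bar>E $$ i\<bar> * real (m - i + 1) * \<bar>K $$ (m - i + 1)\<bar>"
        by (simp add: abs_mult)
      also have "\<dots> \<le> \<bar>E $$ i\<bar> * real (m + 1) * (1 / R^(m - i + 1))"
        using IH[OF le] by (intro mult_mono) auto
      also have "\<dots> = real (m+1) / R^(m+1) * (\<bar>E $$ i\<bar> * R^i)"
      proof -
        have "R^(m+1) = R^(m - i + 1) * R^i" using that False by (simp flip: power_add)
        thus ?thesis using R by (simp add: field_simps)
      qed
      finally show ?thesis .
    qed
    have b2: "\<bar>(real (i+1) * E $$ (i+1)) * K $$ (m - i)\<bar> \<le> real (m+1) / R^(m+1) * (\<bar>E $$ (i+1)\<bar> * R^(i+1))"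
      if "i \<in> {0..m}" for i
    proof -
      have le: "m - i \<le> m" by simp
      have "\<bar>(real (i+1) * E $$ (i+1)) * K $$ (m - i)\<bar> = real (i+1) * \<bar>E $$ (i+1)\<bar> * \<bar>K $$ (m - i)\<bar>"
        by (simp add: abs_mult)
      also have "\<dots> \<le> real (m+1) * \<bar>E $$ (i+1)\<bar> * (1 / R^(m - i))"
        using IH[OF le] that by (intro mult_mono) auto
      also have "\<dots> = real (m+1) / R^(m+1) * (\<bar>E $$ (i+1)\<bar> * R^(i+1))"
      proof -
        have "R^(m+1) = R^(m - i) * R^(i+1)" using that by (simp flip: power_add)
        thus ?thesis using R by (simp add: field_simps)
      qed
      finally show ?thesis .
    qed
    have "2 * (real (m+1) * \<bar>K $$ (m+1)\<bar>) = \<bar>2 * (\<Sum>i=0..m. E $$ i * (real (m - i + 1) * K $$ (m - i + 1)))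
          + (\<Sum>i=0..m. (real (i+1) * E $$ (i+1)) * K $$ (m - i))\<bar>"
      using arg_cong[OF c2, of abs] by (simp add: abs_mult)
    also have "\<dots> \<le> 2 * (\<Sum>i=0..m. \<bar>E $$ i * (real (m - i + 1) * K $$ (m - i + 1))\<bar>)
          + (\<Sum>i=0..m. \<bar>(real (i+1) * E $$ (i+1)) * K $$ (m - i)\<bar>)"
    proof (intro order.trans[OF abs_triangle_ineq] add_mono)
      have h2: "\<bar>2 * x\<bar> = 2 * \<bar>x\<bar>" for x :: real by simp
      show "\<bar>2 * (\<Sum>i=0..m. E $$ i * (real (m - i + 1) * K $$ (m - i + 1)))\<bar> \<le>
        2 * (\<Sum>i=0..m. \<bar>E $$ i * (real (m - i + 1) * K $$ (m - i + 1))\<bar>)"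
        unfolding h2 by (intro mult_left_mono sum_abs) simp
    qed (rule sum_abs)
    also have "\<dots> \<le> 2 * (\<Sum>i=0..m. real (m+1) / R^(m+1) * (\<bar>E $$ i\<bar> * R^i))
          + (\<Sum>i=0..m. real (m+1) / R^(m+1) * (\<bar>E $$ (i+1)\<bar> * R^(i+1)))"
      by (intro add_mono mult_left_mono sum_mono b1 b2) auto
    also have "\<dots> = real (m+1) / R^(m+1) * (2 * S1 + S2)"
      by (simp add: S1_def S2_def sum_distrib_left algebra_simps)
    also have "\<dots> \<le> real (m+1) / R^(m+1) * 2"
    proof -
      have "2 * S1 + S2 \<le> 3 * e" using S1 S2 by simp
      also have "\<dots> \<le> 2" using Es by (simp add: e_def)
      finally show ?thesis using R by (intro mult_left_mono) auto
    qed
    finally have A: "2 * (real (m+1) * \<bar>K $$ (m+1)\<bar>) \<le> real (m+1) / R^(m+1) * 2" .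
    have "real (m+1) / R^(m+1) * 2 = 2 * (real (m+1) * (1 / R^(m+1)))" by simp
    hence "real (m+1) * \<bar>K $$ (m+1)\<bar> \<le> real (m+1) * (1 / R^(m+1))" using A by linarith
    hence "\<bar>K $$ (m+1)\<bar> \<le> 1 / R^(m+1)" by (rule mult_left_le_imp_le) simp
    hence "\<bar>K $$ (m+1)\<bar> * R^(m+1) \<le> 1" using R by (simp add: pos_le_divide_eq)
    thus ?thesis using Suc by simp
  qed
qed

lemma binom_m1: "fps_binomial (-1 :: real) * (1 + fps_X) = 1"
proof (rule fps_ext)
  fix n
  have g: "((-1::real) gchoose k) = (-1)^k" for k
    using gbinomial_minus[of "1::real" k] by (simp flip: binomial_gbinomial)
  show "(fps_binomial (-1 :: real) * (1 + fps_X)) $$ n = (1 :: real fps) $$ n"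
    by (cases n) (simp_all add: algebra_simps g)
qed

definition gcf :: "real \<Rightarrow> nat \<Rightarrow> real" where
  "gcf u i = (if i = 0 then 1 else if i = 1 then u - 4 else if i = 2 then (u - 2)^2
     else if i = 3 then u * (u - 2)^2 - 4 else 0)"

definition Gfps :: "real \<Rightarrow> real fps" where "Gfps u = Abs_fps (gcf u)"

lemma Gfps_factor:
  assumes "u^4 - 4*u^3 + 4*u^2 - 4*u + 4 = 0"
  shows "(1 - fps_const u * fps_X) * Gfps u = Qfps"
proof (rule fps_ext)
  fix n
  have e: "(1 - fps_const u * fps_X) * Gfps u = Gfps u - fps_const u * (fps_X * Gfps u)"
    by (simp add: algebra_simps)
  have q: "Qfps $$ n = (if n = 0 then 1 else if n = 1 then -4 else if n = 2 then 4 else if n = 3 then -4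
     else if n = 4 then 4 else 0)"
    by (simp add: Qfps_def fps_X_power_mult_nth numeral_fps_const power2_eq_square fps_X_power_nth
        flip: fps_const_mult fps_const_power; presburger)
  show "((1 - fps_const u * fps_X) * Gfps u) $$ n = Qfps $$ n"
    unfolding e q using assms
    by (auto simp: Gfps_def gcf_def fps_X_mult_nth power2_eq_square algebra_simps numeral_eq_Suc
        power3_eq_cube power4_eq_xxxx)
qed

definition Ufps :: "real \<Rightarrow> real fps" where
  "Ufps u = Abs_fps (\<lambda>k. ((-1/2) gchoose k) * (-u)^k)"

lemma Ufps_compose: "Ufps u = fps_binomial (-1/2) oo (fps_const (-u) * fps_X)"
  unfolding Ufps_def fps_compose_linear by (simp add: mult.commute)

lemma Ufps_0: "Ufps u $$ 0 = 1" by (simp add: Ufps_def)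

lemma Ufps_sq: "(Ufps u)^2 * (1 - fps_const u * fps_X) = 1"
proof -
  define L where "L = fps_const (-u) * fps_X"
  have L0: "L $$ 0 = 0" by (simp add: L_def)
  have "(Ufps u)^2 = (fps_binomial (-1/2) * fps_binomial (-1/2)) oo L"
    by (simp add: Ufps_compose L_def power2_eq_square fps_compose_mult_distrib[OF L0[unfolded L_def]])
  also have "fps_binomial (-1/2) * fps_binomial (-1/2) = fps_binomial (-1 :: real)"
    using fps_binomial_add_mult[of "-1/2::real" "-1/2"] by simp
  finally have U2: "(Ufps u)^2 = fps_binomial (-1) oo L" .
  have "1 - fps_const u * fps_X = (1 + fps_X) oo L"
    by (simp add: fps_compose_add_distrib L0 L_def)
  hence "(Ufps u)^2 * (1 - fps_const u * fps_X) = (fps_binomial (-1) * (1 + fps_X)) oo L"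
    unfolding U2 by (simp add: fps_compose_mult_distrib[OF L0])
  also have "\<dots> = 1" by (simp add: binom_m1)
  finally show ?thesis .
qed

definition Kfps :: "real \<Rightarrow> real fps" where "Kfps u = inverse (Ufps u * Rfps)"

lemma Kfps_0: "Kfps u $$ 0 = 1"
  by (simp add: Kfps_def Ufps_0 Rfps_0)

lemma P_decomp: "Pfps = (1 - fps_X) * Ufps u * Kfps u"
proof -
  have "Pfps = (1 - fps_X) * inverse Rfps"
    using eta_fps_eq unfolding eta_fps_def Rfps_def by simp
  also have "\<dots> = (1 - fps_X) * (Ufps u * inverse (Ufps u)) * inverse Rfps"
    using inverse_mult_eq_1'[of "Ufps u"] Ufps_0 by simp
  also have "\<dots> = (1 - fps_X) * Ufps u * Kfps u"
    by (simp add: Kfps_def fps_inverse_mult mult.assoc)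
  finally show ?thesis .
qed

lemma K_sq:
  assumes "u^4 - 4*u^3 + 4*u^2 - 4*u + 4 = 0"
  shows "(Kfps u)^2 * Gfps u = 1"
proof -
  define W where "W = Ufps u * Rfps"
  have W0: "W $$ 0 \<noteq> 0" by (simp add: W_def Ufps_0 Rfps_0)
  have "W^2 = (Ufps u)^2 * Qfps" by (simp add: W_def power_mult_distrib Rfps_sq)
  also have "\<dots> = ((Ufps u)^2 * (1 - fps_const u * fps_X)) * Gfps u"
    by (simp add: Gfps_factor[OF assms, symmetric] mult.assoc)
  also have "\<dots> = Gfps u" by (simp add: Ufps_sq)
  finally have W2: "W^2 = Gfps u" .
  have "(Kfps u)^2 * Gfps u = (inverse W * W)^2"
    by (simp add: Kfps_def W_def[symmetric] W2[symmetric] power_mult_distrib)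
  also have "\<dots> = 1" using inverse_mult_eq_1[OF W0] by simp
  finally show ?thesis .
qed

lemma K_ode:
  assumes "u^4 - 4*u^3 + 4*u^2 - 4*u + 4 = 0"
  shows "2 * (1 + (Gfps u - 1)) * fps_deriv (Kfps u) + fps_deriv (Gfps u - 1) * Kfps u = 0"
proof -
  define K where "K = Kfps u"
  define G where "G = Gfps u"
  have "K * (2 * G * fps_deriv K + fps_deriv G * K) = fps_deriv (K^2 * G)"
    by (simp add: power2_eq_square algebra_simps)
  also have "\<dots> = 0" using K_sq[OF assms] by (simp add: K_def G_def)
  finally have "K * (2 * G * fps_deriv K + fps_deriv G * K) = 0" .
  moreover have "K \<noteq> 0"
  proof
    assume "K = 0" hence "K $$ 0 = 0" by simp
    thus False by (simp add: K_def Kfps_0)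
  qed
  ultimately have "2 * G * fps_deriv K + fps_deriv G * K = 0" by simp
  thus ?thesis by (simp add: K_def G_def)
qed

lemma fps_eval_mult:
  fixes F H :: "real fps" and r :: real
  assumes sF: "summable (\<lambda>n. \<bar>F $$ n * r^n\<bar>)" and sH: "summable (\<lambda>n. \<bar>H $$ n * r^n\<bar>)"
  shows "(\<lambda>n. (F * H) $$ n * r^n) sums ((\<Sum>n. F $$ n * r^n) * (\<Sum>n. H $$ n * r^n))"
    and "summable (\<lambda>n. \<bar>(F * H) $$ n * r^n\<bar>)"
proof -
  define a where "a k = F $$ k * r^k" for k
  define b where "b k = H $$ k * r^k" for k
  have e: "(\<Sum>i\<le>k. a i * b (k - i)) = (F * H) $$ k * r^k" for k
  proof -
    have "(\<Sum>i\<le>k. a i * b (k - i)) = (\<Sum>i\<le>k. F $$ i * H $$ (k - i) * r^k)"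
      by (intro sum.cong refl) (auto simp: a_def b_def power_add[symmetric])
    also have "\<dots> = (F * H) $$ k * r^k"
      by (simp add: fps_mult_nth atLeast0AtMost sum_distrib_right)
    finally show ?thesis .
  qed
  have na: "summable (\<lambda>k. norm (a k))" using sF by (simp add: a_def)
  have nb: "summable (\<lambda>k. norm (b k))" using sH by (simp add: b_def)
  show "(\<lambda>n. (F * H) $$ n * r^n) sums ((\<Sum>n. F $$ n * r^n) * (\<Sum>n. H $$ n * r^n))"
    using Cauchy_product_sums[OF na nb] unfolding e by (simp add: a_def b_def)
  have na': "summable (\<lambda>k. norm (norm (a k)))" using na by simp
  have nb': "summable (\<lambda>k. norm (norm (b k)))" using nb by simp
  have s: "summable (\<lambda>k. \<Sum>i\<le>k. norm (a i) * norm (b (k - i)))"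
    by (rule summable_Cauchy_product[OF na' nb'])
  show "summable (\<lambda>n. \<bar>(F * H) $$ n * r^n\<bar>)"
  proof (rule summable_comparison_test[OF _ s], intro exI allI impI)
    fix n :: nat
    have "norm \<bar>(F * H) $$ n * r^n\<bar> = \<bar>\<Sum>i\<le>n. a i * b (n - i)\<bar>" by (simp add: e)
    also have "\<dots> \<le> (\<Sum>i\<le>n. \<bar>a i * b (n - i)\<bar>)" by (rule sum_abs)
    also have "\<dots> = (\<Sum>i\<le>n. norm (a i) * norm (b (n - i)))" by (simp add: abs_mult)
    finally show "norm \<bar>(F * H) $$ n * r^n\<bar> \<le> (\<Sum>i\<le>n. norm (a i) * norm (b (n - i)))" .
  qed
qed

lemma fps_eval_finite:
  fixes F :: "real fps"
  assumes "\<And>n. n > N \<Longrightarrow> F $$ n = 0"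
  shows "(\<lambda>n. F $$ n * r^n) sums (\<Sum>n\<le>N. F $$ n * r^n)" and "summable (\<lambda>n. \<bar>F $$ n * r^n\<bar>)"
proof -
  show "(\<lambda>n. F $$ n * r^n) sums (\<Sum>n\<le>N. F $$ n * r^n)"
    by (rule sums_finite) (use assms in auto)
  show "summable (\<lambda>n. \<bar>F $$ n * r^n\<bar>)"
    by (rule summable_finite[of "{..N}"]) (use assms in auto)
qed

lemma map_deg_nonneg: "map_deg f X Y \<ge> 0"
  by (simp add: map_deg_def sum_nonneg)

lemma Pfps_nonneg: "n \<ge> 1 \<Longrightarrow> Pfps $$ n \<ge> 0"
proof -
  assume n: "n \<ge> 1"
  have "0 \<le> Pfps $$ n / 2 ^ (n - 1)"
    using part1[OF n] map_deg_nonneg[of carolina "Comp n" "Comp n"] by simp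
  hence "0 \<le> Pfps $$ n / 2 ^ (n - 1) * 2 ^ (n - 1)" by (intro mult_nonneg_nonneg) auto
  thus ?thesis by simp
qed

lemma Ufps_nth: "Ufps u $$ k = cc k * u^k"
  by (simp add: Ufps_def cc_def power_minus[of u] mult_ac)

lemma u_facts:
  assumes r0: "0 < \<rho>" and rq: "quartic \<rho> = 0" and rmin: "\<forall>x. 0 < x \<and> x < \<rho> \<longrightarrow> quartic x \<noteq> 0"
  shows "2.93 \<le> 1/\<rho>" "1/\<rho> \<le> 2.96" "(1/\<rho>)^4 - 4*(1/\<rho>)^3 + 4*(1/\<rho>)^2 - 4*(1/\<rho>) + 4 = 0"
proof -
  have rb: "0.338 < \<rho>" "\<rho> \<le> 0.341" using rho_bounds[OF r0 rq rmin] by auto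
  show "2.93 \<le> 1/\<rho>" using rb r0 by (simp add: pos_le_divide_eq)
  show "1/\<rho> \<le> 2.96" using rb r0 by (simp add: pos_divide_le_eq)
  define u where "u = 1/\<rho>"
  have ur: "u * \<rho> = 1" using r0 by (simp add: u_def)
  have "quartic \<rho> * u^4 = u^4 - 4*u^3 + 4*u^2 - 4*u + 4"
    using ur unfolding quartic_def by algebra
  thus "(1/\<rho>)^4 - 4*(1/\<rho>)^3 + 4*(1/\<rho>)^2 - 4*(1/\<rho>) + 4 = 0" using rq by (simp add: u_def)
qed

lemma Es_bound:
  assumes "2.93 \<le> u" "u \<le> 2.96"
  shows "\<bar>gcf u 1\<bar> * 0.39 + \<bar>gcf u 2\<bar> * 0.39^2 + \<bar>gcf u 3\<bar> * 0.39^3 \<le> 2/3"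
proof -
  have a1: "\<bar>gcf u 1\<bar> \<le> 1.07" using assms by (simp add: gcf_def)
  have p1: "(u - 2)^2 \<le> 0.96^2" using assms by (intro power_mono) auto
  have p2: "0.93^2 \<le> (u - 2)^2" using assms by (intro power_mono) auto
  have a2: "\<bar>gcf u 2\<bar> \<le> 0.9216" using p1 by (simp add: gcf_def power2_eq_square)
  have m1: "u * (u - 2)^2 \<le> 2.96 * 0.96^2" using assms p1 by (intro mult_mono) auto
  have m2: "2.93 * 0.93^2 \<le> u * (u - 2)^2" using assms p2 by (intro mult_mono) auto
  have a3: "\<bar>gcf u 3\<bar> \<le> 1.466" using m1 m2 by (simp add: gcf_def power2_eq_square abs_if)
  have "\<bar>gcf u 1\<bar> * 0.39 + \<bar>gcf u 2\<bar> * 0.39^2 + \<bar>gcf u 3\<bar> * 0.39^3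
        \<le> 1.07 * 0.39 + 0.9216 * 0.39^2 + 1.466 * 0.39^3"
    using a1 a2 a3 by (intro add_mono mult_right_mono) auto
  also have "\<dots> \<le> 2/3" by (simp add: power_divide)
  finally show ?thesis .
qed

lemma eta_limit:
  assumes r0: "0 < \<rho>" and rq: "quartic \<rho> = 0" and rmin: "\<forall>x. 0 < x \<and> x < \<rho> \<longrightarrow> quartic x \<noteq> 0"
  shows "(\<lambda>n. Pfps $$ n * \<rho>^n / cc n) \<longlonglongrightarrow> (1 - \<rho>) / (2 * sqrt (1 - 3*\<rho> + 2*\<rho>^2 - \<rho>^3))"
    and "1 - 3*\<rho> + 2*\<rho>^2 - \<rho>^3 > 0" "\<rho> < 1"
proof -
  have rb: "0.338 < \<rho>" "\<rho> \<le> 0.341" using rho_bounds[OF r0 rq rmin] by auto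
  show "\<rho> < 1" using rb by simp
  define u where "u = 1/\<rho>"
  have ur: "u * \<rho> = 1" using r0 by (simp add: u_def)
  have ub: "2.93 \<le> u" "u \<le> 2.96" and urel: "u^4 - 4*u^3 + 4*u^2 - 4*u + 4 = 0"
    using u_facts[OF r0 rq rmin] by (simp_all add: u_def)
  define R :: real where "R = 0.39"
  have R: "0 < R" "R \<le> 1" by (simp_all add: R_def)
  define K where "K = Kfps u"
  define G where "G = Gfps u"
  have E0: "(G - 1) $$ i = 0" if "i \<notin> {1,2,3}" for i
    using that by (auto simp: G_def Gfps_def gcf_def)
  have Es: "\<bar>(G - 1) $$ 1\<bar> * R + \<bar>(G - 1) $$ 2\<bar> * R^2 + \<bar>(G - 1) $$ 3\<bar> * R^3 \<le> 2/3"
    using Es_bound[OF ub] by (simp add: G_def Gfps_def R_def)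
  have Kb: "\<bar>K $$ n\<bar> * R^n \<le> 1" for n
    by (rule K_bound[OF R E0 Es]) (use K_ode[OF urel] Kfps_0 in \<open>simp_all add: K_def G_def\<close>)
  have Kb': "\<bar>K $$ n\<bar> \<le> 1 / R^n" for n
    using Kb[of n] R by (simp add: pos_le_divide_eq)
  define h where "h = (1 - fps_X) * K"
  have hn: "h $$ n = K $$ n - (if n = 0 then 0 else K $$ (n - 1))" for n
  proof -
    have "h = K - fps_X * K" by (simp add: h_def algebra_simps)
    thus ?thesis by (simp add: fps_X_mult_nth)
  qed
  have hb: "\<bar>h $$ n\<bar> \<le> 2 / R^n" for n
  proof (cases n)
    case 0 thus ?thesis using Kb'[of 0] by (simp add: hn)
  next
    case (Suc m)
    have "1 / R^m \<le> 1 / R^n" using R Suc by (simp add: frac_le power_le_one divide_le_eq)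
    hence "\<bar>K $$ m\<bar> \<le> 1 / R^n" using Kb'[of m] by linarith
    thus ?thesis using Kb'[of n] Suc by (simp add: hn)
  qed
  define q where "q = \<rho> / R"
  have q: "0 \<le> q" "q < 1" using rb r0 by (simp_all add: q_def R_def)
  define \<beta> where "\<beta> j = h $$ j * \<rho>^j" for j
  have \<beta>b: "\<bar>\<beta> j\<bar> \<le> 2 * q^j" for j
  proof -
    have "\<bar>\<beta> j\<bar> = \<bar>h $$ j\<bar> * \<rho>^j" using r0 by (simp add: \<beta>_def abs_mult)
    also have "\<dots> \<le> 2 / R^j * \<rho>^j" using hb[of j] r0 by (intro mult_right_mono) auto
    also have "\<dots> = 2 * q^j" by (simp add: q_def power_divide)
    finally show ?thesis .
  qed
  have P_eq: "Pfps = Ufps u * h" by (simp add: P_decomp[of u] h_def K_def mult_ac)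
  have conv: "Pfps $$ n * \<rho>^n = (\<Sum>k\<le>n. cc k * \<beta> (n - k))" for n
  proof -
    have "Pfps $$ n * \<rho>^n = (\<Sum>k\<le>n. cc k * u^k * h $$ (n - k) * \<rho>^n)"
      by (simp add: P_eq fps_mult_nth Ufps_nth atLeast0AtMost sum_distrib_right)
    also have "\<dots> = (\<Sum>k\<le>n. cc k * \<beta> (n - k))"
    proof (intro sum.cong refl)
      fix k assume "k \<in> {..n}"
      hence "\<rho>^n = \<rho>^k * \<rho>^(n - k)" by (simp flip: power_add)
      hence "u^k * \<rho>^n = \<rho>^(n - k)" using ur by (simp add: power_mult_distrib[symmetric] mult.assoc[symmetric])
      thus "cc k * u^k * h $$ (n - k) * \<rho>^n = cc k * \<beta> (n - k)"
        by (simp add: \<beta>_def)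
    qed
    finally show ?thesis .
  qed
  have lim: "(\<lambda>n. Pfps $$ n * \<rho>^n / cc n) \<longlonglongrightarrow> (\<Sum>j. \<beta> j)"
    unfolding conv by (rule conv_lim[OF q \<beta>b])
  have sK: "summable (\<lambda>n. \<bar>K $$ n * \<rho>^n\<bar>)"
  proof (rule summable_comparison_test[OF _ summable_geometric[of q]])
    show "\<exists>N. \<forall>n\<ge>N. norm \<bar>K $$ n * \<rho>^n\<bar> \<le> q^n"
    proof (intro exI allI impI)
      fix n :: nat
      have "norm \<bar>K $$ n * \<rho>^n\<bar> = \<bar>K $$ n\<bar> * \<rho>^n" using r0 by (simp add: abs_mult)
      also have "\<dots> \<le> 1 / R^n * \<rho>^n" using Kb'[of n] r0 by (intro mult_right_mono) auto
      also have "\<dots> = q^n" by (simp add: q_def power_divide)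
      finally show "norm \<bar>K $$ n * \<rho>^n\<bar> \<le> q^n" .
    qed
  qed (use q in simp)
  define Kr where "Kr = (\<Sum>n. K $$ n * \<rho>^n)"
  have fin1: "(1 - fps_X :: real fps) $$ n = 0" if "n > 1" for n using that by simp
  have e1: "(\<Sum>n. (1 - fps_X :: real fps) $$ n * \<rho>^n) = 1 - \<rho>"
    using sums_unique[OF fps_eval_finite(1)[of 1 "1 - fps_X" \<rho>, OF fin1]] by simp
  have "(\<lambda>n. h $$ n * \<rho>^n) sums ((\<Sum>n. (1 - fps_X :: real fps) $$ n * \<rho>^n) * Kr)"
    unfolding h_def Kr_def by (rule fps_eval_mult(1)[OF fps_eval_finite(2)[of 1, OF fin1] sK])
  hence S: "(\<Sum>j. \<beta> j) = (1 - \<rho>) * Kr" unfolding e1 \<beta>_def by (rule sums_unique[symmetric])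
  have KK1: "(\<lambda>n. (K * K) $$ n * \<rho>^n) sums (Kr * Kr)" unfolding Kr_def by (rule fps_eval_mult(1)[OF sK sK])
  have KK2: "summable (\<lambda>n. \<bar>(K * K) $$ n * \<rho>^n\<bar>)" by (rule fps_eval_mult(2)[OF sK sK])
  have finG: "G $$ n = 0" if "n > 3" for n using that by (simp add: G_def Gfps_def gcf_def)
  have KKG: "(\<lambda>n. (K * K * G) $$ n * \<rho>^n) sums ((Kr * Kr) * (\<Sum>n\<le>3. G $$ n * \<rho>^n))"
  proof -
    have Gs1: "(\<lambda>n. G $$ n * \<rho>^n) sums (\<Sum>n\<le>3. G $$ n * \<rho>^n)"
      by (rule fps_eval_finite(1)) (use finG in auto)
    have Gs2: "summable (\<lambda>n. \<bar>G $$ n * \<rho>^n\<bar>)"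
      by (rule fps_eval_finite(2)) (use finG in auto)
    show ?thesis using fps_eval_mult(1)[OF KK2 Gs2] sums_unique[OF KK1] sums_unique[OF Gs1] by simp
  qed
  have "K * K * G = 1" using K_sq[OF urel] by (simp add: K_def G_def power2_eq_square)
  moreover have "(\<lambda>n. (1 :: real fps) $$ n * \<rho>^n) sums 1"
    using fps_eval_finite(1)[of 0 "1 :: real fps" \<rho>] by simp
  ultimately have KrG: "(Kr * Kr) * (\<Sum>n\<le>3. G $$ n * \<rho>^n) = 1"
    using KKG sums_unique2 by metis
  define \<kappa> where "\<kappa> = 1 - 3*\<rho> + 2*\<rho>^2 - \<rho>^3"
  have "(\<Sum>n\<le>3. G $$ n * \<rho>^n) = 1 + (u - 4) * \<rho> + (u - 2)^2 * \<rho>^2 + (u * (u - 2)^2 - 4) * \<rho>^3"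
    by (simp add: G_def Gfps_def gcf_def numeral_3_eq_3 numeral_2_eq_2)
  also have "\<dots> = 4 * \<kappa>" unfolding \<kappa>_def using ur by algebra
  finally have Kr2: "Kr^2 * (4 * \<kappa>) = 1" using KrG by (simp add: power2_eq_square)
  have S0: "0 \<le> (\<Sum>j. \<beta> j)"
  proof (rule LIMSEQ_le_const[OF lim], intro exI allI impI)
    fix n :: nat assume "1 \<le> n"
    thus "0 \<le> Pfps $$ n * \<rho>^n / cc n"
      using Pfps_nonneg[of n] cc_pos[of n] r0 by (intro divide_nonneg_nonneg mult_nonneg_nonneg) auto
  qed
  have Kr0: "Kr \<ge> 0" using S0 rb unfolding S by (simp add: zero_le_mult_iff)
  show kpos: "\<kappa> > 0"
  proof (rule ccontr)
    assume "\<not> \<kappa> > 0"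
    hence "Kr^2 * (4 * \<kappa>) \<le> 0" by (intro mult_nonneg_nonpos) auto
    thus False using Kr2 by simp
  qed
  have "Kr = sqrt (Kr^2)" using Kr0 by simp
  also have "Kr^2 = 1 / (4 * \<kappa>)" using Kr2 kpos by (simp add: field_simps)
  also have "sqrt (1 / (4 * \<kappa>)) = 1 / (2 * sqrt \<kappa>)"
    by (simp add: real_sqrt_divide real_sqrt_mult)
  finally have KrV: "Kr = 1 / (2 * sqrt \<kappa>)" .
  show "(\<lambda>n. Pfps $$ n * \<rho>^n / cc n) \<longlonglongrightarrow> (1 - \<rho>) / (2 * sqrt (1 - 3*\<rho> + 2*\<rho>^2 - \<rho>^3))"
    using lim unfolding S KrV \<kappa>_def by simp
qed

theorem mainTheorem15:
  fixes \<rho> :: real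
  assumes "0 < \<rho>" and "quartic \<rho> = 0"
    and "\<forall>x. 0 < x \<and> x < \<rho> \<longrightarrow> quartic x \<noteq> 0"
  shows "(\<forall>n\<ge>1. map_deg carolina (Comp n) (Comp n) = eta n / 2 ^ (n - 1))
    \<and> (\<lambda>n. map_deg carolina (Comp n) (Comp n)) \<sim>[at_top]
      (\<lambda>n. (1 - \<rho>) / sqrt (pi * (1 - 3*\<rho> + 2*\<rho>^2 - \<rho>^3) * real n) * (1 / (2*\<rho>)) ^ n)"
proof (intro conjI allI impI)
  fix n :: nat assume "n \<ge> 1"
  thus "map_deg carolina (Comp n) (Comp n) = eta n / 2 ^ (n - 1)" by (rule part1_eta)
next
  note L = eta_limit[OF assms]
  define \<kappa> where "\<kappa> = 1 - 3*\<rho> + 2*\<rho>^2 - \<rho>^3"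
  have k: "\<kappa> > 0" using L(2) by (simp add: \<kappa>_def)
  have r1: "\<rho> < 1" by (rule L(3))
  have r0: "\<rho> > 0" by (rule assms(1))
  define A where "A = 2 * sqrt (pi * \<kappa>) / (1 - \<rho>)"
  define md where "md n = map_deg carolina (Comp n) (Comp n)" for n
  define tg where "tg n = (1 - \<rho>) / sqrt (pi * \<kappa> * real n) * (1 / (2*\<rho>)) ^ n" for n :: nat
  have eq: "md n / tg n = A * (Pfps $$ n * \<rho>^n / cc n) * (cc n * sqrt (real n))" if n: "n \<ge> 1" for n
  proof -
    have c: "cc n > 0" by (rule cc_pos)
    have s: "sqrt (pi * \<kappa> * real n) = sqrt (pi * \<kappa>) * sqrt (real n)" by (simp add: real_sqrt_mult)
    have sp: "sqrt (pi * \<kappa>) > 0" "sqrt (real n) > 0" using k n by simp_all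
    have p: "(1 / (2*\<rho>)) ^ n = 1 / (2^n * \<rho>^n)" by (simp add: power_divide power_mult_distrib)
    have t: "(2::real)^n = 2 * 2^(n - 1)" using n by (cases n) simp_all
    show ?thesis
      unfolding md_def tg_def part1[OF n] A_def s p t using c sp r0 r1
      by (simp add: field_simps)
  qed
  have "(\<lambda>n. A * (Pfps $$ n * \<rho>^n / cc n) * (cc n * sqrt (real n))) \<longlonglongrightarrow>
          A * ((1 - \<rho>) / (2 * sqrt \<kappa>)) * (1 / sqrt pi)"
  proof -
    have L1: "(\<lambda>n. Pfps $$ n * \<rho>^n / cc n) \<longlonglongrightarrow> (1 - \<rho>) / (2 * sqrt \<kappa>)"
      using L(1) by (simp add: \<kappa>_def)
    show ?thesis by (intro tendsto_mult tendsto_const L1 cc_asymp)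
  qed
  also have "A * ((1 - \<rho>) / (2 * sqrt \<kappa>)) * (1 / sqrt pi) = 1"
    using k r1 by (simp add: A_def real_sqrt_mult field_simps)
  finally have lim: "(\<lambda>n. A * (Pfps $$ n * \<rho>^n / cc n) * (cc n * sqrt (real n))) \<longlonglongrightarrow> 1" .
  have "(\<lambda>n. md n / tg n) \<longlonglongrightarrow> 1"
  proof (rule Lim_transform_eventually[OF lim])
    show "\<forall>\<^sub>F n in sequentially. A * (Pfps $$ n * \<rho>^n / cc n) * (cc n * sqrt (real n)) = md n / tg n"
      using eventually_ge_at_top[of "1::nat"] by eventually_elim (simp add: eq)
  qed
  hence "md \<sim>[at_top] tg" by (rule asymp_equivI')
  thus "(\<lambda>n. map_deg carolina (Comp n) (Comp n)) \<sim>[at_top]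
      (\<lambda>n. (1 - \<rho>) / sqrt (pi * (1 - 3*\<rho> + 2*\<rho>^2 - \<rho>^3) * real n) * (1 / (2*\<rho>)) ^ n)"
    unfolding md_def[abs_def] tg_def[abs_def] \<kappa>_def .
qed

end
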